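(* Let $\rho,\mu\in\mathcal P_2(\mathbb R^d)$ with $\|\rho\|_\infty,\|\mu\|_\infty\le1$, and let $\rho_{\tau,m}$ be any one-step minimizer of $E_m(\cdot;\mu)$ starting from $\rho$. Then for $0<\tau<1$ and $m\ge2$, $$\int(\rho_{\tau,m}(x)-1)_+\,dx\le\sqrt{(2+C_d^2)/m}.$$
   Context: $\mathcal N(x)=\frac1{2\pi}\log|x|$ if $d=2$, $\mathcal N(x)=\frac{-1}{d(d-2)\alpha_d}|x|^{2-d}$ if $d\ne2$; $\mathbf N\mu=\mathcal N*\mu$. $\mathcal P_2$: probability measures with finite second moment, identified with densities; $W_2$: 2-Wasserstein distance. Fixed mollifier $\psi\in C_c^\infty$, $\psi\ge0$, $\int\psi=1$, $\psi_{1/m}(x)=m^d\psi(mx)$. $E_m(\nu;\mu)=\frac1{m-1}\int\nu^m+\int\psi_{1/m}*\mathbf N\mu\,d\nu$ if $\nu\ll\mathcal L^d$, else $+\infty$; $\rho_{\tau,m}\in\operatorname{argmin}_{\nu\in\mathcal P_2}\{\frac1{2\tau}W_2^2(\rho,\nu)+E_m(\nu;\mu)\}$. $C_d\ge1$ is a fixed constant depending only on $d$ such that for all $\rho,\nu\in\mathcal P_2$ with $\|\rho\|_\infty\le1$: $\|\nabla\mathbf N\rho\|_\infty\le C_d$, $\int\mathbf N\rho\,d\nu\ge-C_d$, and $|\nabla\mathbf N\rho(x)-\nabla\mathbf N\rho(y)|\le C_d\sigma(|x-y|)$ with $\sigma$ a fixed log-Lipschitz modulus. *)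

theory Defs
  imports "HOL-Analysis.Analysis" "HOL-Probability.Probability"
begin

fun Ck_fun :: "nat \<Rightarrow> ('a::euclidean_space \<Rightarrow> real) \<Rightarrow> bool" where
  "Ck_fun 0 f = continuous_on UNIV f"
| "Ck_fun (Suc k) f = (\<exists>g. (\<forall>x. GDERIV f x :> g x) \<and> (\<forall>i\<in>Basis. Ck_fun k (\<lambda>x. g x \<bullet> i)))"

definition Cc_inf :: "('a::euclidean_space \<Rightarrow> real) \<Rightarrow> bool" where
  "Cc_inf f \<longleftrightarrow> (\<forall>k. Ck_fun k f) \<and> compact (closure {x. f x \<noteq> 0})"

definition P2 :: "('a::euclidean_space \<Rightarrow> real) \<Rightarrow> bool" where
  "P2 \<nu> \<longleftrightarrow> \<nu> \<in> borel_measurable lborel \<and> (\<forall>x. 0 \<le> \<nu> x)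
     \<and> (\<integral>\<^sup>+x. ennreal (\<nu> x) \<partial>lborel) = 1
     \<and> (\<integral>\<^sup>+x. ennreal (norm x ^ 2 * \<nu> x) \<partial>lborel) < \<infinity>"

definition couplings :: "('a::euclidean_space \<Rightarrow> real) \<Rightarrow> ('a \<Rightarrow> real) \<Rightarrow> ('a \<times> 'a) measure set" where
  "couplings \<rho> \<nu> = {\<gamma>. sets \<gamma> = sets (borel :: ('a \<times> 'a) measure)
      \<and> distr \<gamma> borel fst = density lborel (\<lambda>x. ennreal (\<rho> x))
      \<and> distr \<gamma> borel snd = density lborel (\<lambda>x. ennreal (\<nu> x))}"

definition W2sq :: "('a::euclidean_space \<Rightarrow> real) \<Rightarrow> ('a \<Rightarrow> real) \<Rightarrow> ennreal" where
  "W2sq \<rho> \<nu> = (INF \<gamma>\<in>couplings \<rho> \<nu>. \<integral>\<^sup>+p. ennreal ((norm (fst p - snd p))\<^sup>2) \<partial>\<gamma>)"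

definition alpha_d :: "'a::euclidean_space itself \<Rightarrow> real" where
  "alpha_d _ = measure lborel (ball (0::'a) 1)"

definition Newton :: "'a::euclidean_space \<Rightarrow> real" where
  "Newton x = (if DIM('a) = 2 then ln (norm x) / (2 * pi)
     else - 1 / (real DIM('a) * (real DIM('a) - 2) * alpha_d TYPE('a)) * norm x powr (2 - real DIM('a)))"

definition Npot :: "('a::euclidean_space \<Rightarrow> real) \<Rightarrow> 'a \<Rightarrow> real" where
  "Npot \<mu> x = (\<integral>y. Newton (x - y) * \<mu> y \<partial>lborel)"

definition moll :: "('a::euclidean_space \<Rightarrow> real) \<Rightarrow> real \<Rightarrow> 'a \<Rightarrow> real" where
  "moll \<psi> m x = m ^ DIM('a) * \<psi> (m *\<^sub>R x)"

definition mollNpot :: "('a::euclidean_space \<Rightarrow> real) \<Rightarrow> real \<Rightarrow> ('a \<Rightarrow> real) \<Rightarrow> 'a \<Rightarrow> real" where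
  "mollNpot \<psi> m \<mu> x = (\<integral>z. moll \<psi> m (x - z) * Npot \<mu> z \<partial>lborel)"

text \<open>E_m(nu;mu); value +infinity when the integrals are not finite (only relevant for
  densities; non-absolutely-continuous measures have energy +infinity and never minimize).\<close>
definition Em :: "('a::euclidean_space \<Rightarrow> real) \<Rightarrow> real \<Rightarrow> ('a \<Rightarrow> real) \<Rightarrow> ('a \<Rightarrow> real) \<Rightarrow> ereal" where
  "Em \<psi> m \<mu> \<nu> =
     (if integrable lborel (\<lambda>x. \<nu> x powr m) \<and> integrable lborel (\<lambda>x. mollNpot \<psi> m \<mu> x * \<nu> x)
      then ereal ((\<integral>x. \<nu> x powr m \<partial>lborel) / (m - 1) + (\<integral>x. mollNpot \<psi> m \<mu> x * \<nu> x \<partial>lborel))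
      else \<infinity>)"

definition JKO_obj :: "('a::euclidean_space \<Rightarrow> real) \<Rightarrow> real \<Rightarrow> ('a \<Rightarrow> real) \<Rightarrow> real \<Rightarrow> ('a \<Rightarrow> real) \<Rightarrow> ('a \<Rightarrow> real) \<Rightarrow> ereal" where
  "JKO_obj \<psi> m \<mu> \<tau> \<rho> \<nu> = enn2ereal (W2sq \<rho> \<nu>) / ereal (2 * \<tau>) + Em \<psi> m \<mu> \<nu>"

definition is_JKO_minimizer :: "('a::euclidean_space \<Rightarrow> real) \<Rightarrow> real \<Rightarrow> ('a \<Rightarrow> real) \<Rightarrow> real \<Rightarrow> ('a \<Rightarrow> real) \<Rightarrow> ('a \<Rightarrow> real) \<Rightarrow> bool" where
  "is_JKO_minimizer \<psi> m \<mu> \<tau> \<rho> \<rho>' \<longleftrightarrow> P2 \<rho>' \<and>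
     (\<forall>\<nu>. P2 \<nu> \<longrightarrow> JKO_obj \<psi> m \<mu> \<tau> \<rho> \<rho>' \<le> JKO_obj \<psi> m \<mu> \<tau> \<rho> \<nu>)"

definition Cd_const :: "'a::euclidean_space itself \<Rightarrow> real \<Rightarrow> bool" where
  "Cd_const _ C \<longleftrightarrow> 1 \<le> C \<and>
     (\<forall>\<rho> \<nu> :: 'a \<Rightarrow> real. P2 \<rho> \<and> P2 \<nu> \<and> (AE x in lborel. \<rho> x \<le> 1) \<longrightarrow>
        (\<forall>x. \<exists>g. GDERIV (Npot \<rho>) x :> g \<and> norm g \<le> C)
        \<and> (\<integral>x. Npot \<rho> x * \<nu> x \<partial>lborel) \<ge> - C)"

end

theory Submission
  imports Defs
begin


lemma lborel_integral_affine_eucl: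
  fixes f :: "'a::euclidean_space \<Rightarrow> real" and c :: real
  assumes c: "c \<noteq> 0" and f[measurable]: "f \<in> borel_measurable borel"
  shows "(\<integral>x. f x \<partial>lborel) = \<bar>c\<bar>^DIM('a) * (\<integral>x. f (t + c *\<^sub>R x) \<partial>lborel)"
proof -
  have "(\<integral>x. f x \<partial>lborel) = (\<integral>x. f x \<partial>density (distr lborel borel (\<lambda>x. t + c *\<^sub>R x)) (\<lambda>_. \<bar>c\<bar>^DIM('a)))"
    using lborel_affine[OF c, of t] by simp
  also have "\<dots> = (\<integral>x. \<bar>c\<bar>^DIM('a) * f x \<partial>distr lborel borel (\<lambda>x. t + c *\<^sub>R x))"
    by (subst integral_density) auto
  also have "\<dots> = (\<integral>x. \<bar>c\<bar>^DIM('a) * f (t + c *\<^sub>R x) \<partial>lborel)"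
    by (subst integral_distr) auto
  finally show ?thesis by simp
qed

lemma Npot_lip:
  fixes \<mu> :: "'a::euclidean_space \<Rightarrow> real"
  assumes "Cd_const TYPE('a) C" "P2 \<mu>" "AE x in lborel. \<mu> x \<le> 1"
  shows "norm (Npot \<mu> x - Npot \<mu> y) \<le> C * norm (x - y)"
proof -
  have "\<forall>x. \<exists>g. GDERIV (Npot \<mu>) x :> g \<and> norm g \<le> C"
    using assms unfolding Cd_const_def by blast
  then obtain g where g: "\<And>x. GDERIV (Npot \<mu>) x :> g x" "\<And>x. norm (g x) \<le> C"
    by metis
  show ?thesis
  proof (rule differentiable_bound[where S=UNIV and f' = "\<lambda>x h. h \<bullet> g x"])
    fix x :: 'a
    show "(Npot \<mu> has_derivative (\<lambda>h. h \<bullet> g x)) (at x within UNIV)"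
      using g(1)[of x] by (simp add: gderiv_def)
    have "onorm (\<lambda>h. h \<bullet> g x) \<le> norm (g x)"
      by (rule onorm_le) (simp add: Cauchy_Schwarz_ineq2 mult.commute)
    then show "onorm (\<lambda>h. h \<bullet> g x) \<le> C" using g(2)[of x] by linarith
  qed auto
qed


lemma moll_lip:
  fixes \<psi> :: "'a::euclidean_space \<Rightarrow> real" and \<mu> :: "'a \<Rightarrow> real"
  assumes cont: "continuous_on UNIV \<psi>" and nn: "\<forall>x. 0 \<le> \<psi> x" and int1: "(\<integral>x. \<psi> x \<partial>lborel) = 1"
    and cpt: "compact (closure {x. \<psi> x \<noteq> 0})" and m: "0 < m" and C0: "0 \<le> C"
    and lip: "\<And>x y. norm (Npot \<mu> x - Npot \<mu> y) \<le> C * norm (x - y)"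
  shows "norm (mollNpot \<psi> m \<mu> x - mollNpot \<psi> m \<mu> y) \<le> C * norm (x - y)"
proof -
  define N where "N = Npot \<mu>"
  define M where "M = moll \<psi> m"
  have lipN: "\<And>x y. \<bar>N x - N y\<bar> \<le> C * norm (x - y)" using lip by (simp add: N_def)
  have [measurable]: "\<psi> \<in> borel_measurable borel"
    using cont by (rule borel_measurable_continuous_onI)
  have contN: "continuous_on UNIV N"
    by (rule lipschitz_on_continuous_on[where L=C]) (use lipN C0 in \<open>auto simp: lipschitz_on_def dist_norm\<close>)
  have [measurable]: "N \<in> borel_measurable borel"
    using contN by (rule borel_measurable_continuous_onI)
  have Mdef: "\<And>w. M w = m ^ DIM('a) * \<psi> (m *\<^sub>R w)" by (simp add: M_def moll_def)
  have [measurable]: "M \<in> borel_measurable borel" unfolding Mdef[abs_def] by measurable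
  have M0: "\<And>w. 0 \<le> M w" using nn m by (simp add: Mdef)
  have intM: "(\<integral>w. M w \<partial>lborel) = 1"
  proof -
    have "1 = \<bar>m\<bar>^DIM('a) * (\<integral>x. \<psi> (0 + m *\<^sub>R x) \<partial>lborel)"
      using lborel_integral_affine_eucl[of m \<psi> 0] m int1 by simp
    then show ?thesis using m by (simp add: Mdef)
  qed
  have integM: "integrable lborel M"
    proof (rule ccontr)
    assume "\<not> integrable lborel M"
    then have "(\<integral>w. M w \<partial>lborel) = 0" by (rule not_integrable_integral_eq)
    then show False using intM by simp
  qed
  obtain R where R: "\<And>z. z \<in> closure {x. \<psi> x \<noteq> 0} \<Longrightarrow> norm z \<le> R"
    using compact_imp_bounded[OF cpt] unfolding bounded_pos by blast
  have supp: "norm w \<le> R / m" if "M w \<noteq> 0" for w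
  proof -
    have "\<psi> (m *\<^sub>R w) \<noteq> 0" using that unfolding Mdef by auto
    then have "m *\<^sub>R w \<in> closure {x. \<psi> x \<noteq> 0}" using closure_subset[of "{x. \<psi> x \<noteq> 0}"] by auto
    then have "norm (m *\<^sub>R w) \<le> R" by (rule R)
    then have "m * norm w \<le> R" using m by simp
    then show ?thesis using m by (simp add: pos_le_divide_eq mult.commute)
  qed
  have integ: "integrable lborel (\<lambda>w. M w * N (x - w))" for x
  proof (rule Bochner_Integration.integrable_bound[where f="\<lambda>w. M w * (\<bar>N x\<bar> + C * (R / m))"])
    show "integrable lborel (\<lambda>w. M w * (\<bar>N x\<bar> + C * (R / m)))"
      using integM by (rule integrable_mult_left)
    show "(\<lambda>w. M w * N (x - w)) \<in> borel_measurable lborel" by measurable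
    show "AE w in lborel. norm (M w * N (x - w)) \<le> norm (M w * (\<bar>N x\<bar> + C * (R / m)))"
    proof (rule AE_I2)
      fix w
      show "norm (M w * N (x - w)) \<le> norm (M w * (\<bar>N x\<bar> + C * (R / m)))"
      proof (cases "M w = 0")
        case False
        have "\<bar>N (x - w)\<bar> \<le> \<bar>N x\<bar> + C * norm w"
          using lipN[of "x - w" x] by simp
        also have "\<dots> \<le> \<bar>N x\<bar> + C * (R / m)"
          using mult_left_mono[OF supp[OF False] C0] by simp
        finally show ?thesis using M0[of w]
          by (simp add: abs_mult mult_left_mono)
      qed simp
    qed
  qed
  have rep: "mollNpot \<psi> m \<mu> x = (\<integral>w. M w * N (x - w) \<partial>lborel)" for x
  proof -
    have "mollNpot \<psi> m \<mu> x = (\<integral>z. M (x - z) * N z \<partial>lborel)"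
      by (simp add: mollNpot_def M_def N_def)
    also have "\<dots> = \<bar>-1\<bar>^DIM('a) * (\<integral>w. M (x - (x + (-1) *\<^sub>R w)) * N (x + (-1) *\<^sub>R w) \<partial>lborel)"
      by (rule lborel_integral_affine_eucl) auto
    finally show ?thesis by simp
  qed
  have "mollNpot \<psi> m \<mu> x - mollNpot \<psi> m \<mu> y = (\<integral>w. M w * (N (x - w) - N (y - w)) \<partial>lborel)"
    unfolding rep by (subst Bochner_Integration.integral_diff[symmetric]) (auto simp: integ algebra_simps)
  also have "norm \<dots> \<le> (\<integral>w. M w * (C * norm (x - y)) \<partial>lborel)"
  proof (rule Bochner_Integration.integral_norm_bound_integral)
    show "integrable lborel (\<lambda>w. M w * (N (x - w) - N (y - w)))"
      using integ[of x] integ[of y] by (simp add: right_diff_distrib)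
    show "integrable lborel (\<lambda>w. M w * (C * norm (x - y)))"
      using integM by (rule integrable_mult_left)
    fix w
    show "norm (M w * (N (x - w) - N (y - w))) \<le> M w * (C * norm (x - y))"
      using lipN[of "x - w" "y - w"] M0[of w] by (simp add: abs_mult mult_left_mono)
  qed
  also have "\<dots> = C * norm (x - y)" using intM by simp
  finally show ?thesis .
qed


lemma young_aux:
  fixes d r C \<tau> :: real
  assumes "\<bar>d\<bar> \<le> C * r" "0 \<le> r"
  shows "2*\<tau>*d \<le> r\<^sup>2 + C\<^sup>2 * \<tau>\<^sup>2"
proof -
  have "2*\<tau>*d \<le> 2*\<bar>\<tau>\<bar>*\<bar>d\<bar>" by (simp add: abs_mult[symmetric])
  also have "\<dots> \<le> 2*\<bar>\<tau>\<bar>*(C*r)" using assms by (simp add: mult_left_mono)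
  also have "\<dots> \<le> r\<^sup>2 + C\<^sup>2 * \<tau>\<^sup>2"
  proof -
    have "0 \<le> (r - C*\<bar>\<tau>\<bar>)\<^sup>2" by simp
    then show ?thesis by (simp add: power2_eq_square algebra_simps)
  qed
  finally show ?thesis .
qed


lemma ennreal_integral_le_nn:
  fixes f :: "'b \<Rightarrow> real"
  assumes "integrable M f"
  shows "ennreal (integral\<^sup>L M f) \<le> (\<integral>\<^sup>+x. ennreal (f x) \<partial>M)"
proof -
  have im: "integrable M (\<lambda>x. max (f x) 0)" using assms by auto
  have "integral\<^sup>L M f \<le> integral\<^sup>L M (\<lambda>x. max (f x) 0)"
    by (rule integral_mono[OF assms im]) simp
  also have "\<dots> = enn2real (\<integral>\<^sup>+x. ennreal (max (f x) 0) \<partial>M)"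
    by (rule integral_eq_nn_integral) (use assms in auto)
  also have "(\<integral>\<^sup>+x. ennreal (max (f x) 0) \<partial>M) = (\<integral>\<^sup>+x. ennreal (f x) \<partial>M)"
    by (rule nn_integral_cong) (simp add: ennreal_max_0)
  finally have "ennreal (integral\<^sup>L M f) \<le> ennreal (enn2real (\<integral>\<^sup>+x. ennreal (f x) \<partial>M))"
    by (rule ennreal_leI)
  also have "\<dots> \<le> (\<integral>\<^sup>+x. ennreal (f x) \<partial>M)"
    by (cases "(\<integral>\<^sup>+x. ennreal (f x) \<partial>M)") auto
  finally show ?thesis .
qed

lemma P2_integrable: "P2 \<rho> \<Longrightarrow> integrable lborel \<rho>"
  unfolding P2_def by (intro integrableI_nn_integral_finite[where x=1]) auto

lemma P2_integral: "P2 \<rho> \<Longrightarrow> (\<integral>x. \<rho> x \<partial>lborel) = 1"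
  unfolding P2_def by (subst integral_eq_nn_integral) auto

lemma coupling_bound:
  fixes \<Phi> \<rho> \<rho>' :: "'a::euclidean_space \<Rightarrow> real"
  assumes lip: "\<And>x y. \<bar>\<Phi> x - \<Phi> y\<bar> \<le> C * norm (x - y)" and C0: "0 \<le> C"
    and P: "P2 \<rho>" "P2 \<rho>'"
    and i1: "integrable lborel (\<lambda>x. \<Phi> x * \<rho> x)" and i2: "integrable lborel (\<lambda>x. \<Phi> x * \<rho>' x)"
    and g: "\<gamma> \<in> couplings \<rho> \<rho>'"
  shows "ennreal (2*\<tau>*((\<integral>x. \<Phi> x * \<rho> x \<partial>lborel) - (\<integral>x. \<Phi> x * \<rho>' x \<partial>lborel)))
     \<le> (\<integral>\<^sup>+p. ennreal ((norm (fst p - snd p))\<^sup>2) \<partial>\<gamma>) + ennreal (C\<^sup>2 * \<tau>\<^sup>2)"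
proof -
  have sg: "sets \<gamma> = sets (borel :: ('a \<times> 'a) measure)"
    and d1: "distr \<gamma> borel fst = density lborel (\<lambda>x. ennreal (\<rho> x))"
    and d2: "distr \<gamma> borel snd = density lborel (\<lambda>x. ennreal (\<rho>' x))"
    using g unfolding couplings_def by auto
  have mc: "measurable \<gamma> N = measurable borel N" for N :: "'c measure"
    by (rule measurable_cong_sets) (use sg in auto)
  have [measurable]: "fst \<in> borel_measurable (borel :: ('a \<times> 'a) measure)"
    by (rule borel_measurable_continuous_onI) (intro continuous_intros)
  have [measurable]: "snd \<in> borel_measurable (borel :: ('a \<times> 'a) measure)"
    by (rule borel_measurable_continuous_onI) (intro continuous_intros)
  have mfst: "fst \<in> measurable \<gamma> borel" "snd \<in> measurable \<gamma> borel" unfolding mc by auto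
  have contP: "continuous_on UNIV \<Phi>"
    by (rule lipschitz_on_continuous_on[where L=C]) (use lip C0 in \<open>auto simp: lipschitz_on_def dist_norm\<close>)
  have [measurable]: "\<Phi> \<in> borel_measurable borel"
    using contP by (rule borel_measurable_continuous_onI)
  have [measurable]: "\<rho> \<in> borel_measurable borel" "\<rho>' \<in> borel_measurable borel"
    using P unfolding P2_def by auto
  have nn: "\<And>x. 0 \<le> \<rho> x" "\<And>x. 0 \<le> \<rho>' x" using P unfolding P2_def by auto
  have tr1: "(\<integral>x. \<Phi> x * \<rho> x \<partial>lborel) = (\<integral>p. \<Phi> (fst p) \<partial>\<gamma>)"
  proof -
    have "(\<integral>p. \<Phi> (fst p) \<partial>\<gamma>) = (\<integral>x. \<Phi> x \<partial>distr \<gamma> borel fst)"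
      by (rule integral_distr[symmetric, OF mfst(1)]) simp
    also have "\<dots> = (\<integral>x. \<rho> x *\<^sub>R \<Phi> x \<partial>lborel)" unfolding d1
      by (rule integral_density) (auto simp: nn)
    finally show ?thesis by (simp add: mult.commute)
  qed
  have tr2: "(\<integral>x. \<Phi> x * \<rho>' x \<partial>lborel) = (\<integral>p. \<Phi> (snd p) \<partial>\<gamma>)"
  proof -
    have "(\<integral>p. \<Phi> (snd p) \<partial>\<gamma>) = (\<integral>x. \<Phi> x \<partial>distr \<gamma> borel snd)"
      by (rule integral_distr[symmetric, OF mfst(2)]) simp
    also have "\<dots> = (\<integral>x. \<rho>' x *\<^sub>R \<Phi> x \<partial>lborel)" unfolding d2
      by (rule integral_density) (auto simp: nn)
    finally show ?thesis by (simp add: mult.commute)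
  qed
  have int1: "integrable \<gamma> (\<lambda>p. \<Phi> (fst p))"
  proof -
    have "integrable (density lborel (\<lambda>x. ennreal (\<rho> x))) \<Phi>"
      by (subst integrable_density) (use i1 nn in \<open>auto simp: mult.commute\<close>)
    then have "integrable (distr \<gamma> borel fst) \<Phi>" using d1 by simp
    then show ?thesis using integrable_distr_eq[OF mfst(1), of \<Phi>] by simp
  qed
  have int2: "integrable \<gamma> (\<lambda>p. \<Phi> (snd p))"
  proof -
    have "integrable (density lborel (\<lambda>x. ennreal (\<rho>' x))) \<Phi>"
      by (subst integrable_density) (use i2 nn in \<open>auto simp: mult.commute\<close>)
    then have "integrable (distr \<gamma> borel snd) \<Phi>" using d2 by simp
    then show ?thesis using integrable_distr_eq[OF mfst(2), of \<Phi>] by simp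
  qed
  have tot: "emeasure \<gamma> (space \<gamma>) = 1"
  proof -
    have "emeasure (distr \<gamma> borel fst) UNIV = emeasure \<gamma> (fst -` UNIV \<inter> space \<gamma>)"
      by (rule emeasure_distr[OF mfst(1)]) simp
    also have "\<dots> = emeasure \<gamma> (space \<gamma>)" by simp
    finally have "emeasure \<gamma> (space \<gamma>) = emeasure (density lborel (\<lambda>x. ennreal (\<rho> x))) UNIV"
      using d1 by simp
    also have "\<dots> = (\<integral>\<^sup>+x. ennreal (\<rho> x) \<partial>lborel)"
      by (subst emeasure_density) auto
    also have "\<dots> = 1" using P unfolding P2_def by simp
    finally show ?thesis .
  qed
  have "(\<integral>x. \<Phi> x * \<rho> x \<partial>lborel) - (\<integral>x. \<Phi> x * \<rho>' x \<partial>lborel) = (\<integral>p. \<Phi> (fst p) - \<Phi> (snd p) \<partial>\<gamma>)"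
    unfolding tr1 tr2 using int1 int2 by simp
  then have "ennreal (2*\<tau>*((\<integral>x. \<Phi> x * \<rho> x \<partial>lborel) - (\<integral>x. \<Phi> x * \<rho>' x \<partial>lborel)))
      = ennreal (\<integral>p. 2*\<tau>*(\<Phi> (fst p) - \<Phi> (snd p)) \<partial>\<gamma>)" by simp
  also have "\<dots> \<le> (\<integral>\<^sup>+p. ennreal (2*\<tau>*(\<Phi> (fst p) - \<Phi> (snd p))) \<partial>\<gamma>)"
    by (rule ennreal_integral_le_nn) (use int1 int2 in auto)
  also have "\<dots> \<le> (\<integral>\<^sup>+p. ennreal ((norm (fst p - snd p))\<^sup>2) + ennreal (C\<^sup>2 * \<tau>\<^sup>2) \<partial>\<gamma>)"
  proof (rule nn_integral_mono)
    fix p :: "'a \<times> 'a"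
    have "2*\<tau>*(\<Phi> (fst p) - \<Phi> (snd p)) \<le> (norm (fst p - snd p))\<^sup>2 + C\<^sup>2 * \<tau>\<^sup>2"
      by (rule young_aux[OF lip]) simp
    then show "ennreal (2*\<tau>*(\<Phi> (fst p) - \<Phi> (snd p))) \<le> ennreal ((norm (fst p - snd p))\<^sup>2) + ennreal (C\<^sup>2 * \<tau>\<^sup>2)"
      by (simp add: ennreal_plus[symmetric] ennreal_leI del: ennreal_plus)
  qed
  also have "\<dots> = (\<integral>\<^sup>+p. ennreal ((norm (fst p - snd p))\<^sup>2) \<partial>\<gamma>) + ennreal (C\<^sup>2 * \<tau>\<^sup>2)"
    by (subst nn_integral_add) (auto simp: mc tot)
  finally show ?thesis .
qed


lemma bern_powr:
  fixes r t :: real assumes r: "1 \<le> r" and t: "1 \<le> t"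
  shows "1 + r*(t-1) \<le> t powr r"
proof -
  let ?f = "\<lambda>x. x powr r - r*(x-1)"
  have "?f 1 \<le> ?f t"
  proof (rule DERIV_nonneg_imp_nondecreasing[OF t])
    fix x :: real assume x: "1 \<le> x" "x \<le> t"
    have "(?f has_real_derivative (r * x powr (r-1) - r*1)) (at x)"
      using x by (auto intro!: derivative_eq_intros has_real_derivative_powr)
    moreover have "0 \<le> r * x powr (r-1) - r*1"
    proof -
      have "1 \<le> x powr (r-1)" using x r by (simp add: ge_one_powr_ge_zero)
      then show ?thesis using r by (simp add: mult_left_mono[of 1 _ r, simplified] algebra_simps)
    qed
    ultimately show "\<exists>y. (?f has_real_derivative y) (at x) \<and> 0 \<le> y" by blast
  qed
  then show ?thesis by simp
qed

lemma quad_powr: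
  fixes m t :: real assumes m: "2 \<le> m" and t: "1 \<le> t"
  shows "m*(m-1)/2 * (t-1)\<^sup>2 \<le> t powr m"
proof -
  let ?f = "\<lambda>x. x powr m - m*(m-1)/2 * (x-1)\<^sup>2"
  have "?f 1 \<le> ?f t"
  proof (rule DERIV_nonneg_imp_nondecreasing[OF t])
    fix x :: real assume x: "1 \<le> x" "x \<le> t"
    have "(?f has_real_derivative (m * x powr (m-1) - m*(m-1)/2 * (2*(x-1)))) (at x)"
      using x by (auto intro!: derivative_eq_intros has_real_derivative_powr)
    moreover have "0 \<le> m * x powr (m-1) - m*(m-1)/2 * (2*(x-1))"
    proof -
      have b: "1 + (m-1)*(x-1) \<le> x powr (m-1)" using bern_powr[of "m-1" x] x m by simp
      have "m * (1 + (m-1)*(x-1)) \<le> m * x powr (m-1)" using b m by simp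
      then show ?thesis using m x by (simp add: algebra_simps)
    qed
    ultimately show "\<exists>y. (?f has_real_derivative y) (at x) \<and> 0 \<le> y" by blast
  qed
  then show ?thesis by simp
qed



lemma div_aux:
  fixes a b D k :: real assumes "0 < D" "0 < k" "D * a / 2 \<le> b"
  shows "a / (2 * k) \<le> b / (D * k)"
proof -
  have "D * a \<le> 2 * b" using assms(3) by simp
  then have "(D * a) * k \<le> (2 * b) * k" using assms(2) by (simp add: mult_right_mono)
  then show ?thesis using assms(1,2) by (simp add: field_simps)
qed

lemma final_pointwise:
  fixes t m K :: real assumes t: "0 \<le> t" and m: "2 \<le> m" and K: "0 < K"
  shows "t - 1 \<le> t powr m / (m*(m-1)* sqrt K) + sqrt K * t / 2"
proof (cases "1 \<le> t")
  case False
  have "0 \<le> t powr m / (m*(m-1) * sqrt K)" using m K by (intro divide_nonneg_pos) auto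
  moreover have "0 \<le> sqrt K * t / 2" using t K by simp
  ultimately show ?thesis using False by linarith
next
  case True
  define s where "s = t - 1"
  have sK: "0 < sqrt K" using K by simp
  have "s * (2 * sqrt K) \<le> s\<^sup>2 + (sqrt K)\<^sup>2"
  proof -
    have "0 \<le> (s - sqrt K)\<^sup>2" by simp
    then show ?thesis by (simp add: power2_eq_square algebra_simps)
  qed
  then have a: "s \<le> s\<^sup>2 / (2* sqrt K) + sqrt K / 2"
    using sK by (simp add: field_simps power2_eq_square)
  have q: "m*(m-1)/2 * s\<^sup>2 \<le> t powr m" using quad_powr[OF m True] by (simp add: s_def)
  have mm: "0 < m*(m-1)" using m by simp
  have b: "s\<^sup>2 / (2 * sqrt K) \<le> t powr m / (m*(m-1)* sqrt K)"
    by (rule div_aux[OF mm sK]) (use q in simp)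
  have c: "sqrt K / 2 \<le> sqrt K * t / 2" using True sK by simp
  show ?thesis using a b c by (simp add: s_def)
qed


lemma W2sq_self:
  fixes \<rho> :: "'a::euclidean_space \<Rightarrow> real"
  assumes "P2 \<rho>"
  shows "W2sq \<rho> \<rho> = 0"
proof -
  have [measurable]: "\<rho> \<in> borel_measurable borel" using assms unfolding P2_def by auto
  define D where "D = density lborel (\<lambda>x. ennreal (\<rho> x))"
  define \<gamma> where "\<gamma> = distr D borel (\<lambda>x. (x, x))"
  have sD: "sets D = sets borel" by (simp add: D_def)
  have mD: "measurable D N = measurable borel N" for N :: "'c measure"
    by (rule measurable_cong_sets) (use sD in auto)
  have [measurable]: "(\<lambda>x::'a. (x, x)) \<in> borel_measurable borel"
    by (rule borel_measurable_continuous_onI) (intro continuous_intros)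
  have [measurable]: "fst \<in> borel_measurable (borel :: ('a \<times> 'a) measure)"
    by (rule borel_measurable_continuous_onI) (intro continuous_intros)
  have [measurable]: "snd \<in> borel_measurable (borel :: ('a \<times> 'a) measure)"
    by (rule borel_measurable_continuous_onI) (intro continuous_intros)
  have md: "(\<lambda>x::'a. (x, x)) \<in> measurable D borel" unfolding mD by simp
  have "distr \<gamma> borel fst = distr D borel (fst \<circ> (\<lambda>x. (x, x)))"
    unfolding \<gamma>_def by (rule distr_distr) (auto simp: md)
  also have "\<dots> = distr D borel (\<lambda>x. x)" by (simp add: comp_def)
  also have "\<dots> = D" by (rule distr_id2) (simp add: sD)
  finally have 1: "distr \<gamma> borel fst = D" .
  have "distr \<gamma> borel snd = distr D borel (snd \<circ> (\<lambda>x. (x, x)))"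
    unfolding \<gamma>_def by (rule distr_distr) (auto simp: md)
  also have "\<dots> = distr D borel (\<lambda>x. x)" by (simp add: comp_def)
  also have "\<dots> = D" by (rule distr_id2) (simp add: sD)
  finally have 2: "distr \<gamma> borel snd = D" .
  have 3: "sets \<gamma> = sets (borel :: ('a \<times> 'a) measure)" by (simp add: \<gamma>_def)
  have g: "\<gamma> \<in> couplings \<rho> \<rho>"
    unfolding couplings_def using 1 2 3 unfolding D_def by blast
  have "(\<integral>\<^sup>+p. ennreal ((norm (fst p - snd p))\<^sup>2) \<partial>\<gamma>) = 0"
    unfolding \<gamma>_def by (subst nn_integral_distr) (auto simp: md)
  moreover have "W2sq \<rho> \<rho> \<le> (\<integral>\<^sup>+p. ennreal ((norm (fst p - snd p))\<^sup>2) \<partial>\<gamma>)"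
    unfolding W2sq_def by (rule INF_lower[OF g])
  ultimately show ?thesis by simp
qed

lemma phi_rho_integrable:
  fixes \<Phi> \<rho> :: "'a::euclidean_space \<Rightarrow> real"
  assumes lip: "\<And>x y. \<bar>\<Phi> x - \<Phi> y\<bar> \<le> C * norm (x - y)" and C0: "0 \<le> C" and P: "P2 \<rho>"
  shows "integrable lborel (\<lambda>x. \<Phi> x * \<rho> x)"
proof -
  have contP: "continuous_on UNIV \<Phi>"
    by (rule lipschitz_on_continuous_on[where L=C]) (use lip C0 in \<open>auto simp: lipschitz_on_def dist_norm\<close>)
  have [measurable]: "\<Phi> \<in> borel_measurable borel"
    using contP by (rule borel_measurable_continuous_onI)
  have [measurable]: "\<rho> \<in> borel_measurable borel" and nn: "\<And>x. 0 \<le> \<rho> x"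
    and fin: "(\<integral>\<^sup>+x. ennreal (norm x ^ 2 * \<rho> x) \<partial>lborel) < \<infinity>"
    using P unfolding P2_def by auto
  have i2: "integrable lborel (\<lambda>x. norm x ^ 2 * \<rho> x)"
    by (rule integrableI_nonneg) (use fin nn in auto)
  have i1: "integrable lborel \<rho>" using P by (rule P2_integrable)
  show ?thesis
  proof (rule Bochner_Integration.integrable_bound[where f="\<lambda>x. (\<bar>\<Phi> 0\<bar> + C) * \<rho> x + C * (norm x ^ 2 * \<rho> x)"])
    show "integrable lborel (\<lambda>x. (\<bar>\<Phi> 0\<bar> + C) * \<rho> x + C * (norm x ^ 2 * \<rho> x))"
      using i1 i2 by auto
    show "(\<lambda>x. \<Phi> x * \<rho> x) \<in> borel_measurable lborel" by measurable
    show "AE x in lborel. norm (\<Phi> x * \<rho> x) \<le> norm ((\<bar>\<Phi> 0\<bar> + C) * \<rho> x + C * (norm x ^ 2 * \<rho> x))"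
    proof (rule AE_I2)
      fix x :: 'a
      have a: "\<bar>\<Phi> x\<bar> \<le> \<bar>\<Phi> 0\<bar> + C * norm x" using lip[of x 0] by simp
      have "norm x \<le> 1 + norm x ^ 2"
      proof -
        have "0 \<le> (norm x - 1/2)\<^sup>2" by simp
        then show ?thesis by (simp add: power2_eq_square algebra_simps)
      qed
      then have "C * norm x \<le> C + C * norm x ^ 2" using C0 by (metis distrib_left mult.right_neutral mult_left_mono)
      with a have b: "\<bar>\<Phi> x\<bar> \<le> \<bar>\<Phi> 0\<bar> + C + C * norm x ^ 2" by linarith
      have "\<bar>\<Phi> x * \<rho> x\<bar> = \<bar>\<Phi> x\<bar> * \<rho> x" using nn[of x] by (simp add: abs_mult)
      also have "\<dots> \<le> (\<bar>\<Phi> 0\<bar> + C + C * norm x ^ 2) * \<rho> x" using b nn[of x] by (rule mult_right_mono)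
      also have "\<dots> = (\<bar>\<Phi> 0\<bar> + C) * \<rho> x + C * (norm x ^ 2 * \<rho> x)" by (simp add: algebra_simps)
      finally show "norm (\<Phi> x * \<rho> x) \<le> norm ((\<bar>\<Phi> 0\<bar> + C) * \<rho> x + C * (norm x ^ 2 * \<rho> x))"
        by simp
    qed
  qed
qed

lemma rho_powr:
  fixes \<rho> :: "'a::euclidean_space \<Rightarrow> real"
  assumes P: "P2 \<rho>" and le1: "AE x in lborel. \<rho> x \<le> 1" and m: "1 \<le> m"
  shows "integrable lborel (\<lambda>x. \<rho> x powr m)" "(\<integral>x. \<rho> x powr m \<partial>lborel) \<le> 1"
proof -
  have [measurable]: "\<rho> \<in> borel_measurable borel" and nn: "\<And>x. 0 \<le> \<rho> x"
    using P unfolding P2_def by auto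
  have i1: "integrable lborel \<rho>" using P by (rule P2_integrable)
  have le: "AE x in lborel. \<rho> x powr m \<le> \<rho> x"
    using le1
  proof (rule AE_mp, intro AE_I2 impI)
    fix x assume "\<rho> x \<le> 1"
    then show "\<rho> x powr m \<le> \<rho> x"
      using powr_mono'[of 1 m "\<rho> x"] nn[of x] m by simp
  qed
  show i: "integrable lborel (\<lambda>x. \<rho> x powr m)"
  proof (rule Bochner_Integration.integrable_bound[OF i1])
    show "(\<lambda>x. \<rho> x powr m) \<in> borel_measurable lborel" by measurable
    show "AE x in lborel. norm (\<rho> x powr m) \<le> norm (\<rho> x)"
      using le by eventually_elim (use nn in auto)
  qed
  have "(\<integral>x. \<rho> x powr m \<partial>lborel) \<le> (\<integral>x. \<rho> x \<partial>lborel)"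
    by (rule integral_mono_AE[OF i i1 le])
  then show "(\<integral>x. \<rho> x powr m \<partial>lborel) \<le> 1" using P2_integral[OF P] by simp
qed



lemma ennreal_sub_aux:
  fixes x c :: real and y :: ennreal
  assumes "ennreal x \<le> y + ennreal c" "0 \<le> c"
  shows "ennreal (x - c) \<le> y"
proof (cases y)
  case (real r)
  then have "ennreal x \<le> ennreal (r + c)" using assms by (simp add: ennreal_plus)
  moreover have "0 \<le> r + c" using assms real by simp
  ultimately have "x \<le> r + c" by (simp only: ennreal_le_iff)
  then show ?thesis using real by (auto intro!: ennreal_leI)
qed simp

theorem lemma2p16:
  fixes \<psi> \<rho> \<mu> \<rho>' :: "'a::euclidean_space \<Rightarrow> real" and C \<tau> m :: real
  assumes "Cc_inf \<psi>" "\<forall>x. 0 \<le> \<psi> x" "(\<integral>x. \<psi> x \<partial>lborel) = 1"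
    and "Cd_const TYPE('a) C"
    and "P2 \<rho>" "P2 \<mu>" "AE x in lborel. \<rho> x \<le> 1" "AE x in lborel. \<mu> x \<le> 1"
    and "0 < \<tau>" "\<tau> < 1" "2 \<le> m"
    and "is_JKO_minimizer \<psi> m \<mu> \<tau> \<rho> \<rho>'"
  shows "(\<integral>\<^sup>+x. ennreal (\<rho>' x - 1) \<partial>lborel) \<le> ennreal (sqrt ((2 + C\<^sup>2) / m))"
proof -
  have C1: "1 \<le> C" using assms(4) by (simp add: Cd_const_def)
  then have C0: "0 \<le> C" by simp
  have m0: "0 < m" using assms(11) by simp
  have cont: "continuous_on UNIV \<psi>" using assms(1) unfolding Cc_inf_def by (metis Ck_fun.simps(1))
  have cpt: "compact (closure {x. \<psi> x \<noteq> 0})" using assms(1) unfolding Cc_inf_def by blast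
  define \<Phi> where "\<Phi> = mollNpot \<psi> m \<mu>"
  have lipN: "\<And>x y. norm (Npot \<mu> x - Npot \<mu> y) \<le> C * norm (x - y)"
    by (rule Npot_lip[OF assms(4) assms(6) assms(8)])
  have lip: "\<And>x y. \<bar>\<Phi> x - \<Phi> y\<bar> \<le> C * norm (x - y)"
    using moll_lip[OF cont assms(2) assms(3) cpt m0 C0 lipN] by (simp add: \<Phi>_def)
  have Pr': "P2 \<rho>'" and minim: "\<And>\<nu>. P2 \<nu> \<Longrightarrow> JKO_obj \<psi> m \<mu> \<tau> \<rho> \<rho>' \<le> JKO_obj \<psi> m \<mu> \<tau> \<rho> \<nu>"
    using assms(12) unfolding is_JKO_minimizer_def by auto
  define a where "a = (\<integral>x. \<rho> x powr m \<partial>lborel)"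
  define B where "B = (\<integral>x. \<Phi> x * \<rho> x \<partial>lborel)"
  have ia: "integrable lborel (\<lambda>x. \<rho> x powr m)" and a1: "a \<le> 1"
    using rho_powr[OF assms(5) assms(7)] assms(11) by (auto simp: a_def)
  have iB: "integrable lborel (\<lambda>x. \<Phi> x * \<rho> x)" by (rule phi_rho_integrable[OF lip C0 assms(5)])
  have Emr: "Em \<psi> m \<mu> \<rho> = ereal (a/(m-1) + B)"
    unfolding Em_def using ia iB by (simp add: \<Phi>_def a_def B_def)
  have objr: "JKO_obj \<psi> m \<mu> \<tau> \<rho> \<rho> = ereal (a/(m-1) + B)"
    proof -
    have "enn2ereal (0::ennreal) = ereal 0" using enn2ereal_ennreal[of 0] by simp
    then show ?thesis unfolding JKO_obj_def W2sq_self[OF assms(5)] Emr by (simp add: zero_ereal_def)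
  qed
  have le: "JKO_obj \<psi> m \<mu> \<tau> \<rho> \<rho>' \<le> ereal (a/(m-1) + B)"
    using minim[OF assms(5)] objr by simp
  define W where "W = W2sq \<rho> \<rho>'"
  have Xnn: "0 \<le> enn2ereal W / ereal (2*\<tau>)"
    using assms(9) by (intro zero_le_divide_ereal) auto
  have ints: "integrable lborel (\<lambda>x. \<rho>' x powr m) \<and> integrable lborel (\<lambda>x. \<Phi> x * \<rho>' x)"
  proof (rule ccontr)
    assume "\<not> ?thesis"
    then have "Em \<psi> m \<mu> \<rho>' = \<infinity>" unfolding Em_def by (auto simp: \<Phi>_def)
    then have "JKO_obj \<psi> m \<mu> \<tau> \<rho> \<rho>' = \<infinity>" unfolding JKO_obj_def using Xnn by (simp add: W_def)
    then show False using le by simp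
  qed
  define A' where "A' = (\<integral>x. \<rho>' x powr m \<partial>lborel)"
  define B' where "B' = (\<integral>x. \<Phi> x * \<rho>' x \<partial>lborel)"
  have Emr': "Em \<psi> m \<mu> \<rho>' = ereal (A'/(m-1) + B')"
    unfolding Em_def using ints by (simp add: \<Phi>_def A'_def B'_def)
  have Wfin: "W \<noteq> \<top>"
  proof
    assume "W = \<top>"
    then have "JKO_obj \<psi> m \<mu> \<tau> \<rho> \<rho>' = \<infinity>" unfolding JKO_obj_def Emr' using assms(9)
      by (simp add: W_def[symmetric])
    then show False using le by simp
  qed
  define w where "w = enn2real W"
  have Ww: "W = ennreal w" and w0: "0 \<le> w" using Wfin by (auto simp: w_def less_top[symmetric])
  have lereal: "w/(2*\<tau>) + (A'/(m-1) + B') \<le> a/(m-1) + B"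
  proof -
    have "JKO_obj \<psi> m \<mu> \<tau> \<rho> \<rho>' = ereal (w/(2*\<tau>) + (A'/(m-1) + B'))"
      unfolding JKO_obj_def Emr' W_def[symmetric] Ww using w0 assms(9) by simp
    then show ?thesis using le by simp
  qed
  have wbound: "2*\<tau>*(B - B') - C\<^sup>2 * \<tau>\<^sup>2 \<le> w"
  proof -
    have "ennreal (2*\<tau>*(B - B') - C\<^sup>2 * \<tau>\<^sup>2) \<le> W"
      unfolding W_def W2sq_def
    proof (rule INF_greatest)
      fix \<gamma> assume g: "\<gamma> \<in> couplings \<rho> \<rho>'"
      show "ennreal (2*\<tau>*(B - B') - C\<^sup>2 * \<tau>\<^sup>2) \<le> (\<integral>\<^sup>+p. ennreal ((norm (fst p - snd p))\<^sup>2) \<partial>\<gamma>)"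
      proof -
        have iB': "integrable lborel (\<lambda>x. \<Phi> x * \<rho>' x)" using ints by simp
        have cb: "ennreal (2*\<tau>*(B - B')) \<le> (\<integral>\<^sup>+p. ennreal ((norm (fst p - snd p))\<^sup>2) \<partial>\<gamma>) + ennreal (C\<^sup>2 * \<tau>\<^sup>2)"
          unfolding B_def B'_def by (rule coupling_bound[OF lip C0 assms(5) Pr' iB iB' g])
        show ?thesis by (rule ennreal_sub_aux[OF cb]) simp
      qed
    qed
    then show ?thesis unfolding Ww using w0 by (cases "2*\<tau>*(B - B') - C\<^sup>2 * \<tau>\<^sup>2 \<le> 0") (auto simp: ennreal_le_iff2)
  qed
  define K where "K = (2 + C\<^sup>2) / m"
  have K0: "0 < K" using m0 by (simp add: K_def add_pos_nonneg)
  have mm1: "1 \<le> m - 1" using assms(11) by simp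
  have h1: "B - B' \<le> w/(2*\<tau>) + C\<^sup>2 * \<tau> / 2"
  proof -
    have "2*\<tau>*(B - B') \<le> w + C\<^sup>2 * \<tau>\<^sup>2" using wbound by simp
    then have "(2*\<tau>*(B - B')) / (2*\<tau>) \<le> (w + C\<^sup>2 * \<tau>\<^sup>2) / (2*\<tau>)"
      using assms(9) by (intro divide_right_mono) auto
    also have "(w + C\<^sup>2 * \<tau>\<^sup>2) / (2*\<tau>) = w/(2*\<tau>) + C\<^sup>2 * \<tau> / 2"
      using assms(9) by (simp add: field_simps power2_eq_square)
    finally show ?thesis using assms(9) by simp
  qed
  have h2: "a/(m-1) \<le> 1/(m-1)" using a1 mm1 by (intro divide_right_mono) auto
  have h3: "1/(m-1) \<le> 1" using mm1 by simp
  have h4: "C\<^sup>2 * \<tau> \<le> C\<^sup>2" using assms(10) by (simp add: mult_left_le)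
  have h5: "A'/(m-1) \<le> 1 + C\<^sup>2/2" using lereal h1 h2 h3 h4 by linarith
  have AK: "A' / (m*(m-1)) \<le> K / 2"
  proof -
    have "A' / (m*(m-1)) = (A'/(m-1)) / m" by simp
    also have "\<dots> \<le> (1 + C\<^sup>2/2) / m" using h5 m0 by (intro divide_right_mono) auto
    also have "\<dots> = K / 2" by (simp add: K_def field_simps)
    finally show ?thesis .
  qed
  have sK: "0 < sqrt K" using K0 by simp
  have nn': "\<And>x. 0 \<le> \<rho>' x" using Pr' unfolding P2_def by auto
  define f where "f x = \<rho>' x powr m / (m*(m-1) * sqrt K) + sqrt K * \<rho>' x / 2" for x
  have i1: "integrable lborel (\<lambda>x. \<rho>' x powr m)" using ints by simp
  have i2: "integrable lborel \<rho>'" using Pr' by (rule P2_integrable)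
  have intf: "integrable lborel f" unfolding f_def using i1 i2 by auto
  have f0: "\<And>x. 0 \<le> f x" unfolding f_def using nn' m0 assms(11) sK
    by (intro add_nonneg_nonneg divide_nonneg_pos mult_nonneg_nonneg) auto
  have "(\<integral>\<^sup>+x. ennreal (\<rho>' x - 1) \<partial>lborel) \<le> (\<integral>\<^sup>+x. ennreal (f x) \<partial>lborel)"
    by (rule nn_integral_mono, rule ennreal_leI) (unfold f_def, rule final_pointwise[OF nn' assms(11) K0])
  also have "\<dots> = ennreal (\<integral>x. f x \<partial>lborel)"
    by (rule nn_integral_eq_integral[OF intf]) (simp add: f0)
  also have "(\<integral>x. f x \<partial>lborel) = A' / (m*(m-1) * sqrt K) + sqrt K / 2"
  proof -
    have "(\<integral>x. f x \<partial>lborel) = (\<integral>x. \<rho>' x powr m / (m*(m-1) * sqrt K) \<partial>lborel) + (\<integral>x. sqrt K * \<rho>' x / 2 \<partial>lborel)"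
      unfolding f_def by (rule Bochner_Integration.integral_add) (use i1 i2 in auto)
    also have "\<dots> = A' / (m*(m-1) * sqrt K) + sqrt K * (\<integral>x. \<rho>' x \<partial>lborel) / 2"
      by (simp add: A'_def)
    finally show ?thesis using P2_integral[OF Pr'] by simp
  qed
  also have "A' / (m*(m-1) * sqrt K) + sqrt K / 2 \<le> sqrt K"
  proof -
    have "A' / (m*(m-1) * sqrt K) = (A' / (m*(m-1))) / sqrt K" by simp
    also have "\<dots> \<le> (K/2) / sqrt K" using AK sK by (intro divide_right_mono) auto
    also have "\<dots> = sqrt K / 2" using K0 by (simp add: real_div_sqrt)
    finally have "A' / (m*(m-1) * sqrt K) \<le> sqrt K / 2" .
    then show ?thesis by linarith
  qed
  finally show ?thesis by (simp add: K_def ennreal_leI)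
qed

end
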